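(* Let $X$ be a Banach space as described in the context and let $f\in X$. Then $f$ is (the restriction to $\mathbb{D}$ of) an entire function if and only if $$\lim_{n\to\infty}\big(E_n(f)\big)^{1/n}=0 .$$
   Context: $\mathbb{D}=\{z\in\mathbb{C}:|z|<1\}$. $X$ is a complex Banach space of functions analytic in $\mathbb{D}$ whose norm $\|\cdot\|$ satisfies: (i) $\|f(\cdot\, e^{it})\|=\|f(\cdot)\|$ for all $t\in\mathbb{R}$ and $f\in X$; (ii) $\|f\|<\infty$ for every entire function $f$ (i.e. $X$ contains all entire functions); (iii) for all $f\in X$ and $g\in L[0,2\pi]$, $\big\|\frac{1}{2\pi}\int_0^{2\pi} f(ze^{it})g(t)\,dt\big\|\le \frac{1}{2\pi}\int_0^{2\pi}|g(t)|\,dt\cdot\|f\|$ (the norm on the left is of the function of $z$). For $n\ge 1$, $\mathcal{P}_n$ is the set of complex algebraic polynomials of degree at most $n-1$, and $E_n(f)=\inf_{p\in\mathcal{P}_n}\|f-p\|$. *)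

theory Defs
  imports "HOL-Analysis.Analysis"
begin

text \<open>Functions on the unit disc are represented as functions complex => complex
  that vanish outside the open unit disc (extensional convention).\<close>

definition restrD :: "(complex \<Rightarrow> complex) \<Rightarrow> complex \<Rightarrow> complex" where
  "restrD h = (\<lambda>z. if z \<in> ball 0 1 then h z else 0)"

definition banach_fun_space :: "(complex \<Rightarrow> complex) set \<Rightarrow> ((complex \<Rightarrow> complex) \<Rightarrow> real) \<Rightarrow> bool" where
  "banach_fun_space X N \<longleftrightarrow>
     (\<forall>f\<in>X. f analytic_on ball 0 1 \<and> (\<forall>z. z \<notin> ball 0 1 \<longrightarrow> f z = 0)) \<and>
     (\<lambda>z. 0) \<in> X \<and>
     (\<forall>f\<in>X. \<forall>g\<in>X. (\<lambda>z. f z + g z) \<in> X) \<and>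
     (\<forall>f\<in>X. \<forall>c. (\<lambda>z. c * f z) \<in> X) \<and>
     (\<forall>f\<in>X. 0 \<le> N f) \<and>
     (\<forall>f\<in>X. N f = 0 \<longleftrightarrow> f = (\<lambda>z. 0)) \<and>
     (\<forall>f\<in>X. \<forall>c. N (\<lambda>z. c * f z) = cmod c * N f) \<and>
     (\<forall>f\<in>X. \<forall>g\<in>X. N (\<lambda>z. f z + g z) \<le> N f + N g) \<and>
     (\<forall>u. (\<forall>n. u n \<in> X) \<longrightarrow>
          (\<forall>e>0. \<exists>M. \<forall>m\<ge>M. \<forall>n\<ge>M. N (\<lambda>z. u m z - u n z) < e) \<longrightarrow>
          (\<exists>f\<in>X. (\<lambda>n. N (\<lambda>z. u n z - f z)) \<longlonglongrightarrow> 0))"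

definition rot_invariant :: "(complex \<Rightarrow> complex) set \<Rightarrow> ((complex \<Rightarrow> complex) \<Rightarrow> real) \<Rightarrow> bool" where
  "rot_invariant X N \<longleftrightarrow>
     (\<forall>f\<in>X. \<forall>t::real. (\<lambda>z. f (z * cis t)) \<in> X \<and> N (\<lambda>z. f (z * cis t)) = N f)"

definition contains_entire :: "(complex \<Rightarrow> complex) set \<Rightarrow> bool" where
  "contains_entire X \<longleftrightarrow> (\<forall>h. h holomorphic_on UNIV \<longrightarrow> restrD h \<in> X)"

definition conv_bound :: "(complex \<Rightarrow> complex) set \<Rightarrow> ((complex \<Rightarrow> complex) \<Rightarrow> real) \<Rightarrow> bool" where
  "conv_bound X N \<longleftrightarrow>
     (\<forall>f\<in>X. \<forall>g::real \<Rightarrow> complex. set_integrable lborel {0..2*pi} g \<longrightarrow>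
        (let F = restrD (\<lambda>z. (1 / (2 * pi)) * (LINT t:{0..2*pi}|lborel. f (z * cis t) * g t))
         in F \<in> X \<and> N F \<le> (1 / (2 * pi)) * (LINT t:{0..2*pi}|lborel. cmod (g t)) * N f))"

definition polys :: "nat \<Rightarrow> (complex \<Rightarrow> complex) set" where
  "polys n = {restrD (\<lambda>z. \<Sum>k<n. c k * z ^ k) | c. True}"

definition best_approx :: "((complex \<Rightarrow> complex) \<Rightarrow> real) \<Rightarrow> nat \<Rightarrow> (complex \<Rightarrow> complex) \<Rightarrow> real" where
  "best_approx N n f = (INF p\<in>polys n. N (\<lambda>z. f z - p z))"

end

theory Submission imports Defs "HOL-Complex_Analysis.Complex_Analysis" begin

lemma cis_exp_real: "cis (m * t) = exp (t *\<^sub>R (\<i> * of_real m))"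
  by (simp add: cis_conv_exp scaleR_conv_of_real mult_ac)

lemma int_cis:
  fixes m :: int
  shows "(LINT t:{0..2*pi}|lborel. cis (of_int m * t)) = (if m = 0 then 2*pi else 0)"
proof (cases "m = 0")
  case True
  have "(LINT t:{0..2*pi}|lborel. cis (of_int m * t)) = (LINT t:{0..2*pi}|lborel. (1::complex))"
    using True by simp
  also have "\<dots> = 2*pi"
    unfolding set_lebesgue_integral_def
    by (subst integral_FTC_atLeastAtMost[where F="\<lambda>t. complex_of_real t"])
       (auto intro!: derivative_eq_intros simp: has_vector_derivative_def fun_eq_iff scaleR_conv_of_real)
  finally show ?thesis using True by simp
next
  case False
  let ?F = "\<lambda>t. exp (t *\<^sub>R (\<i> * of_real (of_int m))) / (\<i> * of_real (of_int m))"
  have "(LINT t:{0..2*pi}|lborel. cis (of_int m * t)) = ?F (2*pi) - ?F 0"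
    unfolding set_lebesgue_integral_def
  proof (rule integral_FTC_atLeastAtMost)
    fix x assume "0 \<le> x" "x \<le> 2*pi"
    have "((\<lambda>t. exp (t *\<^sub>R (\<i> * of_real (of_int m)))) has_vector_derivative
           exp (x *\<^sub>R (\<i> * of_real (of_int m))) * (\<i> * of_real (of_int m))) (at x within {0..2*pi})"
      by (rule exp_scaleR_has_vector_derivative_right)
    then have "(?F has_vector_derivative
           exp (x *\<^sub>R (\<i> * of_real (of_int m))) * (\<i> * of_real (of_int m)) / (\<i> * of_real (of_int m))) (at x within {0..2*pi})"
      by (rule has_vector_derivative_divide)
    then show "(?F has_vector_derivative cis (of_int m * x)) (at x within {0..2*pi})"
      using False by (simp add: cis_exp_real)
  qed (auto intro!: continuous_intros)
  also have "\<dots> = 0"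
  proof -
    have "exp ((2*pi) *\<^sub>R (\<i> * of_real (of_int m))) = cis (of_int m * (2*pi))"
      by (simp add: cis_exp_real)
    also have "\<dots> = 1" using cos_int_2pin[of m] sin_int_2pin[of m] by (simp add: cis.ctr complex_eq_iff mult_ac)
    finally show ?thesis by simp
  qed
  finally show ?thesis using False by simp
qed

lemma meas_Icc2pi: "measure lborel {0..2*pi} = 2*pi"
  by simp

lemma cis_pow_kernel:
  "(z * cis t) ^ j * cis (- (real k * t)) = z ^ j * cis (of_int (int j - int k) * t)"
proof -
  have "(z * cis t) ^ j * cis (- (real k * t)) = z ^ j * (cis (real j * t) * cis (- (real k * t)))"
    by (simp add: power_mult_distrib Complex.DeMoivre)
  also have "cis (real j * t) * cis (- (real k * t)) = cis (of_int (int j - int k) * t)"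
    by (simp add: cis_mult algebra_simps)
  finally show ?thesis .
qed

lemma ser_int:
  fixes c :: "nat \<Rightarrow> complex" and G :: "complex \<Rightarrow> complex" and z :: complex
  assumes sums: "\<And>t. (\<lambda>j. c j * (z * cis t) ^ j) sums G (z * cis t)"
    and summ: "summable (\<lambda>j. norm (c j) * norm z ^ j)"
  shows "set_integrable lborel {0..2*pi} (\<lambda>t. G (z * cis t) * cis (- (real k * t)))"
    and "(LINT t:{0..2*pi}|lborel. G (z * cis t) * cis (- (real k * t))) = 2 * pi * c k * z ^ k"
proof -
  define \<phi> where "\<phi> j t = indicator {0..2*pi} t *\<^sub>R (c j * (z * cis t) ^ j * cis (- (real k * t)))" for j t
  have int: "integrable lborel (\<phi> j)" for j
    unfolding \<phi>_def by (intro borel_integrable_compact) (auto intro!: continuous_intros)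
  have nrm: "norm (\<phi> j t) = indicator {0..2*pi} t * (norm (c j) * norm z ^ j)" for j t
    by (auto simp: \<phi>_def norm_mult norm_power split: split_indicator)
  have AE: "AE t in lborel. summable (\<lambda>j. norm (\<phi> j t))"
    unfolding nrm by (intro AE_I2 summable_mult summ)
  have inorm: "(\<integral>t. norm (\<phi> j t) \<partial>lborel) = 2 * pi * (norm (c j) * norm z ^ j)" for j
    unfolding nrm by simp
  have S: "summable (\<lambda>j. \<integral>t. norm (\<phi> j t) \<partial>lborel)"
    unfolding inorm by (intro summable_mult summ)
  have sumeq: "(\<Sum>j. \<phi> j t) = indicator {0..2*pi} t *\<^sub>R (G (z * cis t) * cis (- (real k * t)))" for t
  proof -
    have "(\<lambda>j. c j * (z * cis t) ^ j * cis (- (real k * t))) sums (G (z * cis t) * cis (- (real k * t)))"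
      by (intro sums_mult2 sums)
    then have "(\<lambda>j. \<phi> j t) sums (indicator {0..2*pi} t *\<^sub>R (G (z * cis t) * cis (- (real k * t))))"
      unfolding \<phi>_def by (intro sums_scaleR_right)
    then show ?thesis by (simp add: sums_iff)
  qed
  have ival: "integral\<^sup>L lborel (\<phi> j) = (if j = k then 2 * pi * c k * z ^ k else 0)" for j
  proof -
    have "integral\<^sup>L lborel (\<phi> j) = (LINT t:{0..2*pi}|lborel. (c j * z ^ j) * cis (of_int (int j - int k) * t))"
      unfolding \<phi>_def set_lebesgue_integral_def
      by (intro Bochner_Integration.integral_cong refl) (simp add: mult.assoc cis_pow_kernel)
    also have "\<dots> = (c j * z ^ j) * (LINT t:{0..2*pi}|lborel. cis (of_int (int j - int k) * t))"
      by (rule set_integral_mult_right)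
    also have "\<dots> = (if j = k then 2 * pi * c k * z ^ k else 0)"
      using int_cis[of "int j - int k"] by auto
    finally show ?thesis .
  qed
  have "integrable lborel (\<lambda>t. \<Sum>j. \<phi> j t)"
    by (rule integrable_suminf[OF int AE S])
  then show "set_integrable lborel {0..2*pi} (\<lambda>t. G (z * cis t) * cis (- (real k * t)))"
    unfolding set_integrable_def sumeq .
  have "(\<lambda>j. integral\<^sup>L lborel (\<phi> j)) sums (\<integral>t. (\<Sum>j. \<phi> j t) \<partial>lborel)"
    by (rule sums_integral[OF int AE S])
  then have "(\<lambda>j. if j = k then 2 * pi * c k * z ^ k else 0) sums (LINT t:{0..2*pi}|lborel. G (z * cis t) * cis (- (real k * t)))"
    unfolding ival sumeq set_lebesgue_integral_def .
  moreover have "(\<lambda>j. if j = k then 2 * pi * c k * z ^ k else 0) sums (2 * pi * c k * z ^ k)"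
    using sums_single[of k "\<lambda>_. 2 * pi * c k * z ^ k"] by simp
  ultimately show "(LINT t:{0..2*pi}|lborel. G (z * cis t) * cis (- (real k * t))) = 2 * pi * c k * z ^ k"
    using sums_unique2 by blast
qed

lemma ker_int:
  fixes G :: "complex \<Rightarrow> complex" and c d :: "nat \<Rightarrow> complex" and z :: complex
    and g :: "real \<Rightarrow> complex" and M :: real
  assumes sums: "\<And>t. (\<lambda>j. c j * (z * cis t) ^ j) sums G (z * cis t)"
    and summ: "summable (\<lambda>j. norm (c j) * norm z ^ j)"
    and bnd: "\<And>t. norm (G (z * cis t)) \<le> M"
    and dsum: "summable (\<lambda>k. norm (d k))"
    and gs: "\<And>t. (\<lambda>k. d k * cis (- (real k * t))) sums g t"
  shows "set_integrable lborel {0..2*pi} (\<lambda>t. G (z * cis t) * g t)"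
    and "(\<lambda>k. 2 * pi * d k * c k * z ^ k) sums (LINT t:{0..2*pi}|lborel. G (z * cis t) * g t)"
proof -
  have M0: "0 \<le> M" using bnd[of 0] norm_ge_zero order_trans by blast
  define \<psi> where "\<psi> k t = d k * (indicator {0..2*pi} t *\<^sub>R (G (z * cis t) * cis (- (real k * t))))" for k t
  have int: "integrable lborel (\<psi> k)" for k
    unfolding \<psi>_def using ser_int(1)[OF sums summ, of k]
    by (intro integrable_mult_right) (simp add: set_integrable_def)
  have nb: "norm (\<psi> k t) \<le> indicator {0..2*pi} t *\<^sub>R (norm (d k) * M)" for k t
    using bnd[of t] by (auto simp: \<psi>_def norm_mult mult_left_mono split: split_indicator)
  have nb2: "norm (\<psi> k t) \<le> norm (d k) * M" for k t
  proof -
    have "0 \<le> norm (d k) * M" using M0 by simp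
    then show ?thesis using nb[of k t] by (cases "t \<in> {0..2*pi}") auto
  qed
  have AE: "AE t in lborel. summable (\<lambda>k. norm (\<psi> k t))"
  proof (intro AE_I2)
    fix t show "summable (\<lambda>k. norm (\<psi> k t))"
      by (rule summable_comparison_test[where g="\<lambda>k. norm (d k) * M"])
         (use nb2 dsum in \<open>auto intro!: summable_mult2\<close>)
  qed
  have ib: "(\<integral>t. norm (\<psi> k t) \<partial>lborel) \<le> 2 * pi * (norm (d k) * M)" for k
  proof -
    have "(\<integral>t. norm (\<psi> k t) \<partial>lborel) \<le> (\<integral>t. indicator {0..2*pi} t *\<^sub>R (norm (d k) * M) \<partial>lborel)"
      by (intro integral_mono integrable_norm int nb borel_integrable_compact) auto
    also have "\<dots> = 2 * pi * (norm (d k) * M)" by simp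
    finally show ?thesis .
  qed
  have S: "summable (\<lambda>k. \<integral>t. norm (\<psi> k t) \<partial>lborel)"
    by (rule summable_comparison_test[where g="\<lambda>k. 2 * pi * (norm (d k) * M)"])
       (use ib dsum in \<open>auto intro!: summable_mult summable_mult2\<close>)
  have sumeq: "(\<Sum>k. \<psi> k t) = indicator {0..2*pi} t *\<^sub>R (G (z * cis t) * g t)" for t
  proof -
    have "(\<lambda>k. d k * cis (- (real k * t)) * (indicator {0..2*pi} t *\<^sub>R G (z * cis t))) sums
           (g t * (indicator {0..2*pi} t *\<^sub>R G (z * cis t)))"
      by (intro sums_mult2 gs)
    then have "(\<lambda>k. \<psi> k t) sums (indicator {0..2*pi} t *\<^sub>R (G (z * cis t) * g t))"
      unfolding \<psi>_def by (simp add: mult_ac split: split_indicator)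
    then show ?thesis by (simp add: sums_iff)
  qed
  have ival: "integral\<^sup>L lborel (\<psi> k) = 2 * pi * d k * c k * z ^ k" for k
  proof -
    have "integral\<^sup>L lborel (\<psi> k) = d k * (LINT t:{0..2*pi}|lborel. G (z * cis t) * cis (- (real k * t)))"
      unfolding \<psi>_def set_lebesgue_integral_def by (rule integral_mult_right_zero)
    then show ?thesis using ser_int(2)[OF sums summ, of k] by (simp add: mult_ac)
  qed
  have "integrable lborel (\<lambda>t. \<Sum>k. \<psi> k t)"
    by (rule integrable_suminf[OF int AE S])
  then show "set_integrable lborel {0..2*pi} (\<lambda>t. G (z * cis t) * g t)"
    unfolding set_integrable_def sumeq .
  have "(\<lambda>k. integral\<^sup>L lborel (\<psi> k)) sums (\<integral>t. (\<Sum>k. \<psi> k t) \<partial>lborel)"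
    by (rule sums_integral[OF int AE S])
  then show "(\<lambda>k. 2 * pi * d k * c k * z ^ k) sums (LINT t:{0..2*pi}|lborel. G (z * cis t) * g t)"
    unfolding ival sumeq set_lebesgue_integral_def .
qed

definition emon :: "nat \<Rightarrow> complex \<Rightarrow> complex" where
  "emon k = restrD (\<lambda>z. z ^ k)"

locale BFS =
  fixes X :: "(complex \<Rightarrow> complex) set" and N :: "(complex \<Rightarrow> complex) \<Rightarrow> real"
  assumes bfs: "banach_fun_space X N" and ent: "contains_entire X" and cb: "conv_bound X N"
begin

lemma memD: "f \<in> X \<Longrightarrow> f holomorphic_on ball 0 1"
  using bfs by (auto simp: banach_fun_space_def analytic_on_open)

lemma mem_out: "f \<in> X \<Longrightarrow> z \<notin> ball 0 1 \<Longrightarrow> f z = 0"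
  using bfs by (auto simp: banach_fun_space_def)

lemma zero_mem: "(\<lambda>z. 0) \<in> X" using bfs by (simp add: banach_fun_space_def)
lemma add_mem: "f \<in> X \<Longrightarrow> g \<in> X \<Longrightarrow> (\<lambda>z. f z + g z) \<in> X"
  using bfs by (simp add: banach_fun_space_def)
lemma scal_mem: "f \<in> X \<Longrightarrow> (\<lambda>z. c * f z) \<in> X"
  using bfs by (simp add: banach_fun_space_def)
lemma N_nonneg: "f \<in> X \<Longrightarrow> 0 \<le> N f"
  using bfs by (simp add: banach_fun_space_def)
lemma N_scal: "f \<in> X \<Longrightarrow> N (\<lambda>z. c * f z) = cmod c * N f"
  using bfs by (simp add: banach_fun_space_def)
lemma N_tri: "f \<in> X \<Longrightarrow> g \<in> X \<Longrightarrow> N (\<lambda>z. f z + g z) \<le> N f + N g"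
  using bfs by (simp add: banach_fun_space_def)
lemma complete: "(\<And>n. u n \<in> X) \<Longrightarrow> (\<And>e. e > 0 \<Longrightarrow> \<exists>M. \<forall>m\<ge>M. \<forall>n\<ge>M. N (\<lambda>z. u m z - u n z) < e)
   \<Longrightarrow> \<exists>f\<in>X. (\<lambda>n. N (\<lambda>z. u n z - f z)) \<longlonglongrightarrow> 0"
  using bfs unfolding banach_fun_space_def by blast

lemma diff_mem: "f \<in> X \<Longrightarrow> g \<in> X \<Longrightarrow> (\<lambda>z. f z - g z) \<in> X"
  using add_mem[of f "\<lambda>z. (-1) * g z"] scal_mem[of g "-1"] by simp

lemma N_sym: "f \<in> X \<Longrightarrow> g \<in> X \<Longrightarrow> N (\<lambda>z. f z - g z) = N (\<lambda>z. g z - f z)"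
  using N_scal[OF diff_mem[of f g], of "-1"] diff_mem[of f g] by simp

lemma ent_mem: "h holomorphic_on UNIV \<Longrightarrow> restrD h \<in> X"
  using ent by (simp add: contains_entire_def)

lemma emon_mem: "emon k \<in> X"
  unfolding emon_def by (rule ent_mem) (auto intro: holomorphic_intros)

lemma sum_mem: "finite I \<Longrightarrow> (\<And>i. i \<in> I \<Longrightarrow> \<phi> i \<in> X) \<Longrightarrow> (\<lambda>z. \<Sum>i\<in>I. \<phi> i z) \<in> X \<and> N (\<lambda>z. \<Sum>i\<in>I. \<phi> i z) \<le> (\<Sum>i\<in>I. N (\<phi> i))"
proof (induction I rule: finite_induct)
  case empty
  have "N (\<lambda>z. 0) = 0" using N_scal[OF zero_mem, of 0] by simp
  then show ?case using zero_mem by simp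
next
  case (insert x F)
  then have IH: "(\<lambda>z. \<Sum>i\<in>F. \<phi> i z) \<in> X" "N (\<lambda>z. \<Sum>i\<in>F. \<phi> i z) \<le> (\<Sum>i\<in>F. N (\<phi> i))" by auto
  have px: "\<phi> x \<in> X" using insert by auto
  show ?case
    using add_mem[OF px IH(1)] N_tri[OF px IH(1)] IH(2) insert(1,2) by simp
qed

lemma rep_exists: "f \<in> X \<Longrightarrow> \<exists>c. \<forall>w\<in>ball 0 1. (\<lambda>j. c j * w ^ j) sums f w"
  using holomorphic_power_series[OF memD] by (intro exI[of _ "\<lambda>n. (deriv ^^ n) f 0 / fact n"]) force

lemma rep_summable:
  fixes c :: "nat \<Rightarrow> complex" and z :: complex
  assumes "\<forall>w\<in>ball 0 1. (\<lambda>j. c j * w ^ j) sums f w" "norm z < 1"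
  shows "summable (\<lambda>j. norm (c j) * norm z ^ j)"
proof -
  define r where "r = (1 + norm z) / 2"
  let ?x = "complex_of_real r"
  have nx: "norm ?x = r" unfolding norm_of_real r_def by simp
  have x: "?x \<in> ball 0 1" using assms(2) nx by (simp add: r_def)
  have "summable (\<lambda>j. c j * ?x ^ j)" using assms(1) x by (auto simp: sums_iff)
  from powser_insidea[OF this, of z] assms(2)
  show ?thesis using nx by (simp add: norm_mult norm_power r_def)
qed

lemma coefN:
  assumes G: "G \<in> X" and rep: "\<forall>w\<in>ball 0 1. (\<lambda>j. c j * w ^ j) sums G w"
  shows "norm (c k) * N (emon k) \<le> N G"
proof -
  define g where "g t = cis (- (real k * t))" for t
  have gi: "set_integrable lborel {0..2*pi} g"
    unfolding g_def by (intro borel_integrable_atLeastAtMost') (auto intro!: continuous_intros)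
  define F where "F = restrD (\<lambda>z. (1 / (2 * pi)) * (LINT t:{0..2*pi}|lborel. G (z * cis t) * g t))"
  from cb G gi have FX: "F \<in> X" and NF: "N F \<le> (1 / (2 * pi)) * (LINT t:{0..2*pi}|lborel. cmod (g t)) * N G"
    unfolding conv_bound_def F_def Let_def by blast+
  have "(LINT t:{0..2*pi}|lborel. cmod (g t)) = (LINT t:{0..2*pi}|lborel. (1::real))"
    by (simp add: g_def)
  also have "\<dots> = 2 * pi" by (simp add: set_lebesgue_integral_def)
  finally have NF2: "N F \<le> N G" using NF by simp
  have Feq: "F = (\<lambda>z. c k * emon k z)"
  proof
    fix z
    show "F z = c k * emon k z"
    proof (cases "z \<in> ball 0 1")
      case True
      then have nz: "norm z < 1" by simp
      have s: "(\<lambda>j. c j * (z * cis t) ^ j) sums G (z * cis t)" for t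
        using rep nz by (auto simp: norm_mult)
      have "(LINT t:{0..2*pi}|lborel. G (z * cis t) * g t) = 2 * pi * c k * z ^ k"
        unfolding g_def by (rule ser_int(2)[OF s rep_summable[OF rep nz]])
      then show ?thesis using True by (simp add: F_def restrD_def emon_def)
    qed (simp add: F_def restrD_def emon_def)
  qed
  have "N F = norm (c k) * N (emon k)" unfolding Feq by (rule N_scal[OF emon_mem])
  then show ?thesis using NF2 by simp
qed


lemma N_zero_iff: "f \<in> X \<Longrightarrow> N f = 0 \<longleftrightarrow> f = (\<lambda>z. 0)"
  using bfs by (simp add: banach_fun_space_def)

lemma emon_pos: "0 < N (emon k)"
proof -
  have "emon k (1/2) \<noteq> 0" by (simp add: emon_def restrD_def)
  then have "emon k \<noteq> (\<lambda>z. 0)" by metis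
  then show ?thesis using N_zero_iff[OF emon_mem] N_nonneg[OF emon_mem] by (simp add: less_le)
qed

lemma geo_half0: "(\<Sum>j\<in>{n..<n+k}. (1/2::real) ^ j) = 2 * ((1/2) ^ n - (1/2) ^ (n+k))"
proof (induction k)
  case 0 then show ?case by simp
next
  case (Suc k)
  have "(\<Sum>j\<in>{n..<n+Suc k}. (1/2::real) ^ j) = (\<Sum>j\<in>{n..<n+k}. (1/2::real) ^ j) + (1/2) ^ (n+k)"
    by (simp add: sum.atLeastLessThan_Suc)
  also have "\<dots> = 2 * ((1/2) ^ n - (1/2) ^ (n+Suc k))" using Suc by simp
  finally show ?case .
qed

lemma geo_half: "n \<le> m \<Longrightarrow> (\<Sum>j\<in>{n..<m}. (1/2::real) ^ j) = 2 * ((1/2) ^ n - (1/2) ^ m)"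
  using geo_half0[of n "m - n"] by simp

lemma lowbd: "\<exists>K. \<forall>k\<ge>K. (1/4::real) ^ k \<le> N (emon k)"
proof (rule ccontr)
  assume "\<not> ?thesis"
  then have "\<forall>K. \<exists>k\<ge>K. N (emon k) < (1/4) ^ k" by (auto simp: not_le)
  define S where "S = {k. N (emon k) < (1/4::real) ^ k}"
  have infS: "infinite S" unfolding S_def infinite_nat_iff_unbounded_le using \<open>\<forall>K. _\<close> by auto
  define \<kappa> where "\<kappa> = enumerate S"
  have smk: "strict_mono \<kappa>" unfolding \<kappa>_def using strict_mono_enumerate[OF infS] .
  have kS: "N (emon (\<kappa> j)) < (1/4) ^ (\<kappa> j)" for j
    using enumerate_in_set[OF infS, of j] unfolding \<kappa>_def S_def by simp
  have kge: "j \<le> \<kappa> j" for j using seq_suble[OF smk] .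
  have injk: "inj_on \<kappa> A" for A using strict_mono_imp_inj_on[OF smk] inj_on_subset by blast
  define \<phi> where "\<phi> j = (\<lambda>z. (2::complex) ^ (\<kappa> j) * emon (\<kappa> j) z)" for j
  have \<phi>X: "\<phi> j \<in> X" for j unfolding \<phi>_def by (intro scal_mem emon_mem)
  have N\<phi>: "N (\<phi> j) \<le> (1/2) ^ j" for j
  proof -
    have "N (\<phi> j) = 2 ^ (\<kappa> j) * N (emon (\<kappa> j))"
      unfolding \<phi>_def by (simp add: N_scal[OF emon_mem] norm_power)
    also have "\<dots> \<le> 2 ^ (\<kappa> j) * (1/4) ^ (\<kappa> j)"
      using kS[of j] by (intro mult_left_mono) auto
    also have "\<dots> = (1/2) ^ (\<kappa> j)" by (simp add: power_mult_distrib[symmetric])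
    also have "\<dots> \<le> (1/2) ^ j" using kge[of j] by (intro power_decreasing) auto
    finally show ?thesis .
  qed
  define u where "u n = (\<lambda>z. \<Sum>j<n. \<phi> j z)" for n
  have uX: "u n \<in> X" for n unfolding u_def using sum_mem[of "{..<n}" \<phi>] \<phi>X by auto
  have Nud: "N (\<lambda>z. u m z - u n z) \<le> 2 * (1/2) ^ n" if "n \<le> m" for m n
  proof -
    have eq: "(\<lambda>z. u m z - u n z) = (\<lambda>z. \<Sum>j\<in>{n..<m}. \<phi> j z)"
    proof
      fix z
      have "{..<m} = {..<n} \<union> {n..<m}" using that by auto
      then show "u m z - u n z = (\<Sum>j\<in>{n..<m}. \<phi> j z)"
        unfolding u_def by (simp add: sum.union_disjoint ivl_disj_int)
    qed
    have "N (\<lambda>z. u m z - u n z) \<le> (\<Sum>j\<in>{n..<m}. N (\<phi> j))"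
      unfolding eq using sum_mem[of "{n..<m}" \<phi>] \<phi>X by auto
    also have "\<dots> \<le> (\<Sum>j\<in>{n..<m}. (1/2) ^ j)" by (intro sum_mono N\<phi>)
    also have "\<dots> = 2 * ((1/2) ^ n - (1/2) ^ m)" using geo_half[OF that] .
    also have "\<dots> \<le> 2 * (1/2) ^ n" by simp
    finally show ?thesis .
  qed
  have cauchy: "\<exists>M. \<forall>m\<ge>M. \<forall>n\<ge>M. N (\<lambda>z. u m z - u n z) < e" if "e > 0" for e
  proof -
    have e2: "e / 2 > 0" using that by simp
    obtain M where M: "(1/2::real) ^ M < e / 2" using real_arch_pow_inv[OF e2, of "1/2"] by auto
    have "N (\<lambda>z. u m z - u n z) < e" if "m \<ge> M" "n \<ge> M" for m n
    proof (cases "n \<le> m")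
      case True
      have "(1/2::real) ^ n \<le> (1/2) ^ M" using that by (intro power_decreasing) auto
      then show ?thesis using Nud[OF True] M by linarith
    next
      case False
      have "(1/2::real) ^ m \<le> (1/2) ^ M" using that by (intro power_decreasing) auto
      moreover have "N (\<lambda>z. u n z - u m z) \<le> 2 * (1/2) ^ m" using Nud[of m n] False by simp
      ultimately show ?thesis using M N_sym[OF uX uX, of m n] by linarith
    qed
    then show ?thesis by blast
  qed
  obtain F where FX: "F \<in> X" and lim: "(\<lambda>n. N (\<lambda>z. u n z - F z)) \<longlonglongrightarrow> 0"
    using complete[OF uX cauchy] by blast
  obtain c where crep: "\<forall>w\<in>ball 0 1. (\<lambda>j. c j * w ^ j) sums F w" using rep_exists[OF FX] by blast
  define d where "d n k = (if k \<in> \<kappa> ` {..<n} then (2::complex) ^ k else 0)" for n k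
  have urep: "\<forall>w\<in>ball 0 1. (\<lambda>k. (d n k - c k) * w ^ k) sums (u n w - F w)" for n
  proof
    fix w :: complex assume w: "w \<in> ball 0 1"
    have "(\<lambda>k. if k \<in> \<kappa> ` {..<n} then 2 ^ k * w ^ k else 0) sums (\<Sum>k\<in>\<kappa> ` {..<n}. 2 ^ k * w ^ k)"
      by (rule sums_If_finite_set) auto
    also have "(\<Sum>k\<in>\<kappa> ` {..<n}. 2 ^ k * w ^ k) = (\<Sum>j<n. 2 ^ \<kappa> j * w ^ \<kappa> j)"
      by (subst sum.reindex[OF injk]) simp
    also have "\<dots> = u n w" using w unfolding u_def \<phi>_def by (simp add: emon_def restrD_def)
    finally have s1: "(\<lambda>k. if k \<in> \<kappa> ` {..<n} then 2 ^ k * w ^ k else 0) sums u n w" .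
    have "(\<lambda>k. d n k * w ^ k) = (\<lambda>k. if k \<in> \<kappa> ` {..<n} then 2 ^ k * w ^ k else 0)"
      by (auto simp: d_def fun_eq_iff)
    with s1 have "(\<lambda>k. d n k * w ^ k) sums u n w" by simp
    from sums_diff[OF this crep[rule_format, OF w]] show "(\<lambda>k. (d n k - c k) * w ^ k) sums (u n w - F w)"
      by (simp add: algebra_simps)
  qed
  have ck: "c (\<kappa> j) = 2 ^ (\<kappa> j)" for j
  proof -
    have b: "norm (2 ^ (\<kappa> j) - c (\<kappa> j)) * N (emon (\<kappa> j)) \<le> N (\<lambda>z. u n z - F z)" if "n > j" for n
    proof -
      have "d n (\<kappa> j) = 2 ^ (\<kappa> j)" using that by (auto simp: d_def)
      then show ?thesis using coefN[OF diff_mem[OF uX FX] urep[of n], of "\<kappa> j"] by simp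
    qed
    have "norm (2 ^ (\<kappa> j) - c (\<kappa> j)) * N (emon (\<kappa> j)) \<le> 0"
      by (rule LIMSEQ_le_const[OF lim]) (use b in \<open>auto intro!: exI[of _ "Suc j"]\<close>)
    then have "norm (2 ^ (\<kappa> j) - c (\<kappa> j)) \<le> 0"
      using emon_pos[of "\<kappa> j"] by (simp add: mult_le_0_iff)
    then show ?thesis by simp
  qed
  have w34: "complex_of_real (3/4) \<in> ball 0 1" by simp
  have "summable (\<lambda>k. c k * complex_of_real (3/4) ^ k)"
    using crep w34 by (auto simp: sums_iff)
  then have "(\<lambda>k. c k * complex_of_real (3/4) ^ k) \<longlonglongrightarrow> 0" by (rule summable_LIMSEQ_zero)
  from LIMSEQ_subseq_LIMSEQ[OF this smk]
  have "(\<lambda>j. c (\<kappa> j) * complex_of_real (3/4) ^ (\<kappa> j)) \<longlonglongrightarrow> 0" by (simp add: o_def)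
  then have "(\<lambda>j. norm (c (\<kappa> j) * complex_of_real (3/4) ^ (\<kappa> j))) \<longlonglongrightarrow> 0"
    by (rule tendsto_norm_zero)
  moreover have "1 \<le> norm (c (\<kappa> j) * complex_of_real (3/4) ^ (\<kappa> j))" for j
  proof -
    have "norm (c (\<kappa> j) * complex_of_real (3/4) ^ (\<kappa> j)) = (3/2::real) ^ (\<kappa> j)"
      by (simp add: ck norm_mult norm_power power_mult_distrib[symmetric])
    then show ?thesis by simp
  qed
  ultimately have "1 \<le> (0::real)" by (intro LIMSEQ_le_const) auto
  then show False by simp
qed


lemma poly_mem: "p \<in> polys k \<Longrightarrow> p \<in> X"
  unfolding polys_def by (auto intro!: ent_mem holomorphic_intros)

lemma polys_ne: "polys k \<noteq> {}"
  unfolding polys_def by auto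

lemma E_nonneg: "f \<in> X \<Longrightarrow> 0 \<le> best_approx N k f"
  unfolding best_approx_def
  by (rule cINF_greatest[OF polys_ne]) (intro N_nonneg diff_mem, assumption, erule poly_mem)

lemma coef_E:
  assumes fX: "f \<in> X" and rep: "\<forall>w\<in>ball 0 1. (\<lambda>j. c j * w ^ j) sums f w"
  shows "norm (c k) * N (emon k) \<le> best_approx N k f"
  unfolding best_approx_def
proof (rule cINF_greatest[OF polys_ne])
  fix p assume p: "p \<in> polys k"
  then obtain b where pb: "p = restrD (\<lambda>z. \<Sum>i<k. b i * z ^ i)" unfolding polys_def by auto
  have prep: "\<forall>w\<in>ball 0 1. (\<lambda>j. (c j - (if j < k then b j else 0)) * w ^ j) sums (f w - p w)"
  proof
    fix w :: complex assume w: "w \<in> ball 0 1"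
    have "(\<lambda>j. if j \<in> {..<k} then b j * w ^ j else 0) sums (\<Sum>j\<in>{..<k}. b j * w ^ j)"
      by (rule sums_If_finite_set) auto
    moreover have "(\<lambda>j. (if j < k then b j else 0) * w ^ j) = (\<lambda>j. if j \<in> {..<k} then b j * w ^ j else 0)"
      by (auto simp: fun_eq_iff)
    ultimately have "(\<lambda>j. (if j < k then b j else 0) * w ^ j) sums p w"
      using w by (simp add: pb restrD_def)
    from sums_diff[OF rep[rule_format, OF w] this]
    show "(\<lambda>j. (c j - (if j < k then b j else 0)) * w ^ j) sums (f w - p w)"
      by (simp add: algebra_simps)
  qed
  show "norm (c k) * N (emon k) \<le> N (\<lambda>z. f z - p z)"
    using coefN[OF diff_mem[OF fX poly_mem[OF p]] prep, of k] by simp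
qed

lemma powr_root_bound:
  fixes x \<rho> :: real
  assumes "0 \<le> x" "0 < k" "x powr (1 / real k) \<le> \<rho>"
  shows "x \<le> \<rho> ^ k"
proof (cases "x = 0")
  case True
  have "0 \<le> \<rho>" using assms(3) powr_ge_zero[of x "1 / real k"] by linarith
  then show ?thesis using True by simp
next
  case False
  then have xp: "0 < x" using assms(1) by simp
  have "(x powr (1 / real k)) ^ k = (x powr (1 / real k)) powr (real k)"
    using xp by (simp add: powr_realpow)
  also have "\<dots> = x" using assms(2) xp by (simp add: powr_powr)
  finally have "x = (x powr (1 / real k)) ^ k" by simp
  also have "\<dots> \<le> \<rho> ^ k" using assms(3) by (intro power_mono) auto
  finally show ?thesis .
qed

lemma conv_dir:
  assumes fX: "f \<in> X" and lim: "(\<lambda>n. best_approx N n f powr (1 / real n)) \<longlonglongrightarrow> 0"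
  shows "\<exists>h. h holomorphic_on UNIV \<and> (\<forall>z\<in>ball 0 1. f z = h z)"
proof -
  obtain c where rep: "\<forall>w\<in>ball 0 1. (\<lambda>j. c j * w ^ j) sums f w" using rep_exists[OF fX] by blast
  obtain K where K: "\<And>k. k \<ge> K \<Longrightarrow> (1/4::real) ^ k \<le> N (emon k)" using lowbd by blast
  have cb: "norm (c k) \<le> 4 ^ k * best_approx N k f" if "k \<ge> K" for k
  proof -
    have "norm (c k) * (1/4) ^ k \<le> norm (c k) * N (emon k)"
      using K[OF that] by (intro mult_left_mono) auto
    also have "\<dots> \<le> best_approx N k f" by (rule coef_E[OF fX rep])
    finally have "norm (c k) * (1/4) ^ k * 4 ^ k \<le> best_approx N k f * 4 ^ k"
      by (intro mult_right_mono) auto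
    then show ?thesis by (simp add: power_mult_distrib[symmetric] mult_ac)
  qed
  have summ: "summable (\<lambda>k. c k * w ^ k)" for w :: complex
  proof -
    define \<rho> where "\<rho> = 1 / (8 * (norm w + 1))"
    have \<rho>p: "\<rho> > 0" unfolding \<rho>_def using norm_ge_zero[of w] by (simp del: norm_ge_zero)
    have ev1: "eventually (\<lambda>n. best_approx N n f powr (1 / real n) < \<rho>) sequentially"
      using lim \<rho>p by (auto simp: tendsto_iff dist_real_def)
    have ev2: "eventually (\<lambda>n. n \<ge> max K 1) sequentially" by (rule eventually_ge_at_top)
    have "eventually (\<lambda>n. norm (c n * w ^ n) \<le> (1/2) ^ n) sequentially"
      using ev1 ev2
    proof eventually_elim
      case (elim n)
      have En: "best_approx N n f \<le> \<rho> ^ n"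
        using powr_root_bound[OF E_nonneg[OF fX, of n], of n \<rho>] elim by auto
      have "norm (c n * w ^ n) = norm (c n) * norm w ^ n" by (simp add: norm_mult norm_power)
      also have "\<dots> \<le> (4 ^ n * \<rho> ^ n) * norm w ^ n"
        using cb[of n] elim En by (intro mult_right_mono order_trans[OF cb]) auto
      also have "\<dots> = (4 * \<rho> * norm w) ^ n" by (simp add: power_mult_distrib)
      also have "\<dots> \<le> (1/2) ^ n"
      proof (intro power_mono)
        have "4 * \<rho> * norm w = norm w / (2 * (norm w + 1))" proof -
          have pw: "0 < norm w + 1" using norm_ge_zero[of w] by linarith
          show ?thesis unfolding \<rho>_def using pw by (simp add: field_simps)
        qed
        also have "\<dots> \<le> 1/2"
        proof -
          have pw: "0 < 2 * (norm w + 1)" by (smt (verit) norm_ge_zero)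
          show ?thesis using pw by (simp add: divide_simps)
        qed
        finally show "4 * \<rho> * norm w \<le> 1/2" .
        show "0 \<le> 4 * \<rho> * norm w" using \<rho>p by simp
      qed
      finally show ?case .
    qed
    then show ?thesis
      by (rule summable_comparison_test_ev) (simp add: summable_geometric)
  qed
  define h where "h w = (\<Sum>k. c k * w ^ k)" for w
  have hs: "(\<lambda>k. c k * w ^ k) sums h w" for w unfolding h_def using summ[of w] by (simp add: summable_sums)
  have hol: "h holomorphic_on UNIV"
    unfolding holomorphic_on_def
  proof
    fix x :: complex
    have "h holomorphic_on ball 0 (norm x + 1)"
      by (rule power_series_holomorphic[where a=c]) (use hs in simp)
    then have "h field_differentiable at x"
      by (rule holomorphic_on_imp_differentiable_at) auto
    then show "h field_differentiable at x within UNIV" by simp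
  qed
  have "\<forall>z\<in>ball 0 1. f z = h z" using rep hs sums_unique2 by blast
  with hol show ?thesis by blast
qed


lemma fwd_bound:
  assumes fX: "f \<in> X" and H: "H holomorphic_on UNIV" and fH: "\<forall>z\<in>ball 0 1. f z = H z"
    and R: "R \<ge> 2"
  shows "best_approx N n f \<le> 2 * (1/R) ^ n * N (restrD (\<lambda>w. H (of_real R * w)))"
proof -
  define a where "a k = (deriv ^^ k) H 0 / fact k" for k
  have Hs: "(\<lambda>k. a k * w ^ k) sums H w" for w
  proof -
    have "H holomorphic_on ball 0 (norm w + 1)" using H by (rule holomorphic_on_subset) auto
    from holomorphic_power_series[OF this, of w] show ?thesis by (simp add: a_def)
  qed
  have asum: "summable (\<lambda>k. norm (a k) * r ^ k)" if r: "r \<ge> 0" for r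
  proof -
    have "summable (\<lambda>k. a k * complex_of_real (r + 1) ^ k)" using Hs by (auto simp: sums_iff)
    from powser_insidea[OF this, of "complex_of_real r"] r
    show ?thesis by (simp add: norm_mult norm_power)
  qed
  define F0 where "F0 = restrD (\<lambda>w. H (of_real R * w))"
  have F0X: "F0 \<in> X" unfolding F0_def
    by (rule ent_mem) (rule holomorphic_on_compose_gen[OF _ H, unfolded o_def]; auto intro: holomorphic_intros)
  define q where "q t = cis (- t) / of_real R" for t
  have nq: "norm (q t) = 1 / R" for t using R by (simp add: q_def norm_divide)
  have q1: "norm (q t) < 1" for t using nq R by simp
  have qn1: "1 - q t \<noteq> 0" for t using q1[of t] by auto
  define g where "g t = (1/R) ^ n * cis (- (real n * t)) / (1 - q t)" for t
  define d where "d k = (if k \<ge> n then complex_of_real ((1/R) ^ k) else 0)" for k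
  have gs: "(\<lambda>k. d k * cis (- (real k * t))) sums g t" for t
  proof -
    have "(\<lambda>k. ((1/R) ^ n * cis (- (real n * t))) * q t ^ k) sums (((1/R) ^ n * cis (- (real n * t))) * (1 / (1 - q t)))"
      by (intro sums_mult geometric_sums q1)
    moreover have "((1/R) ^ n * cis (- (real n * t))) * q t ^ k = d (k + n) * cis (- (real (k + n) * t))" for k
    proof -
      have "q t ^ k = cis (- (real k * t)) / of_real R ^ k"
        by (simp add: q_def power_divide Complex.DeMoivre)
      moreover have "cis (- (real n * t)) * cis (- (real k * t)) = cis (- (real (k + n) * t))"
        by (simp add: cis_mult algebra_simps)
      ultimately show ?thesis
        by (simp add: d_def power_add power_divide field_simps)
    qed
    ultimately have "(\<lambda>k. d (k + n) * cis (- (real (k + n) * t))) sums g t"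
      by (simp add: g_def)
    then show ?thesis
      by (subst sums_zero_iff_shift[symmetric, of n]) (auto simp: d_def)
  qed
  have dsum: "summable (\<lambda>k. norm (d k))"
  proof (rule summable_comparison_test[where g="\<lambda>k. (1/R) ^ k"])
    have "norm (norm (d k)) \<le> (1/R) ^ k" for k
      using R by (simp add: d_def norm_power norm_divide)
    then show "\<exists>N. \<forall>k\<ge>N. norm (norm (d k)) \<le> (1/R) ^ k" by blast
    show "summable (\<lambda>k. (1/R) ^ k)" using R by (intro summable_geometric) auto
  qed
  have gcont: "continuous_on {0..2*pi} g"
    unfolding g_def q_def using qn1 R unfolding q_def by (auto intro!: continuous_intros)
  have gi: "set_integrable lborel {0..2*pi} g" by (rule borel_integrable_atLeastAtMost'[OF gcont])
  have gb: "norm (g t) \<le> 2 * (1/R) ^ n" for t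
  proof -
    have "1 - 1/R \<le> norm (1 - q t)" using norm_triangle_ineq2[of 1 "q t"] nq by simp
    moreover have "1/2 \<le> 1 - 1/R" using R by (simp add: field_simps)
    ultimately have den: "1/2 \<le> norm (1 - q t)" by linarith
    have "norm (g t) = (1/R) ^ n / norm (1 - q t)"
      using R by (simp add: g_def norm_divide norm_mult norm_power)
    also have "\<dots> \<le> (1/R) ^ n / (1/2)"
      using den R by (intro divide_left_mono) auto
    finally show ?thesis by simp
  qed
  have L1: "(LINT t:{0..2*pi}|lborel. cmod (g t)) \<le> 2 * pi * (2 * (1/R) ^ n)"
  proof -
    have "(LINT t:{0..2*pi}|lborel. cmod (g t)) \<le> (LINT t:{0..2*pi}|lborel. 2 * (1/R) ^ n)"
      by (intro set_integral_mono borel_integrable_atLeastAtMost' gb)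
         (use gcont in \<open>auto intro!: continuous_intros\<close>)
    also have "\<dots> = 2 * pi * (2 * (1/R) ^ n)" by (simp add: set_lebesgue_integral_def)
    finally show ?thesis .
  qed
  define F where "F = restrD (\<lambda>z. (1 / (2 * pi)) * (LINT t:{0..2*pi}|lborel. F0 (z * cis t) * g t))"
  from cb F0X gi have FX: "F \<in> X" and NF: "N F \<le> (1 / (2 * pi)) * (LINT t:{0..2*pi}|lborel. cmod (g t)) * N F0"
    unfolding conv_bound_def F_def Let_def by blast+
  have NF2: "N F \<le> 2 * (1/R) ^ n * N F0"
  proof -
    have "(1 / (2 * pi)) * (LINT t:{0..2*pi}|lborel. cmod (g t)) \<le> (1 / (2 * pi)) * (2 * pi * (2 * (1/R) ^ n))"
      using L1 by (intro mult_left_mono) auto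
    then have "(1 / (2 * pi)) * (LINT t:{0..2*pi}|lborel. cmod (g t)) * N F0 \<le> (2 * (1/R) ^ n) * N F0"
      using N_nonneg[OF F0X] by (intro mult_right_mono) auto
    then show ?thesis using NF by simp
  qed
  define p where "p = restrD (\<lambda>z. \<Sum>k<n. a k * z ^ k)"
  have pP: "p \<in> polys n" unfolding p_def polys_def by auto
  have Feq: "F = (\<lambda>z. f z - p z)"
  proof
    fix z
    show "F z = f z - p z"
    proof (cases "z \<in> ball 0 1")
      case False
      then show ?thesis using mem_out[OF fX False] by (simp add: F_def p_def restrD_def)
    next
      case True
      then have nz: "norm z < 1" by simp
      define c where "c j = a j * of_real R ^ j" for j
      have cs: "(\<lambda>j. c j * (z * cis t) ^ j) sums F0 (z * cis t)" for t
      proof -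
        have "z * cis t \<in> ball 0 1" using nz by (simp add: norm_mult)
        then have "F0 (z * cis t) = H (of_real R * (z * cis t))" by (simp add: F0_def restrD_def)
        moreover have "a j * (of_real R * (z * cis t)) ^ j = c j * (z * cis t) ^ j" for j
          by (simp add: c_def power_mult_distrib)
        ultimately show ?thesis using Hs[of "of_real R * (z * cis t)"] by simp
      qed
      have csum: "summable (\<lambda>j. norm (c j) * norm z ^ j)"
      proof -
        have "summable (\<lambda>j. norm (a j) * (R * norm z) ^ j)" using asum[of "R * norm z"] R by simp
        moreover have "norm (c j) * norm z ^ j = norm (a j) * (R * norm z) ^ j" for j
          using R by (simp add: c_def norm_mult norm_power power_mult_distrib)
        ultimately show ?thesis by simp
      qed
      have cbnd: "norm (F0 (z * cis t)) \<le> (\<Sum>j. norm (c j) * norm z ^ j)" for t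
      proof -
        have "F0 (z * cis t) = (\<Sum>j. c j * (z * cis t) ^ j)" using cs[of t] by (simp add: sums_iff)
        moreover have "norm (c j * (z * cis t) ^ j) = norm (c j) * norm z ^ j" for j
          by (simp add: norm_mult norm_power)
        ultimately show ?thesis using summable_norm[of "\<lambda>j. c j * (z * cis t) ^ j"] csum by simp
      qed
      have ks: "(\<lambda>k. 2 * pi * d k * c k * z ^ k) sums (LINT t:{0..2*pi}|lborel. F0 (z * cis t) * g t)"
        by (rule ker_int(2)[OF cs csum cbnd dsum gs])
      have tail: "(\<lambda>k. 2 * pi * d k * c k * z ^ k) sums (2 * pi * (H z - (\<Sum>k<n. a k * z ^ k)))"
      proof -
        have "(\<lambda>k. a k * z ^ k - (if k \<in> {..<n} then a k * z ^ k else 0)) sums (H z - (\<Sum>k\<in>{..<n}. a k * z ^ k))"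
          by (intro sums_diff Hs sums_If_finite_set) auto
        then have "(\<lambda>k. 2 * pi * (a k * z ^ k - (if k \<in> {..<n} then a k * z ^ k else 0))) sums (2 * pi * (H z - (\<Sum>k<n. a k * z ^ k)))"
          by (intro sums_mult) simp
        moreover have "2 * pi * (a k * z ^ k - (if k \<in> {..<n} then a k * z ^ k else 0)) = 2 * pi * d k * c k * z ^ k" for k
        proof (cases "k \<ge> n")
          case True
          have "complex_of_real ((1/R) ^ k) * of_real R ^ k = 1"
            using R by (simp add: power_divide field_simps flip: of_real_power)
          then show ?thesis using True by (simp add: d_def c_def mult_ac)
        qed (simp add: d_def)
        ultimately show ?thesis by (simp only: )
      qed
      have "(LINT t:{0..2*pi}|lborel. F0 (z * cis t) * g t) = 2 * pi * (H z - (\<Sum>k<n. a k * z ^ k))"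
        using sums_unique2[OF ks tail] .
      then show ?thesis using True fH by (simp add: F_def p_def restrD_def)
    qed
  qed
  have "best_approx N n f \<le> N (\<lambda>z. f z - p z)"
    unfolding best_approx_def
  proof (rule cINF_lower[OF _ pP])
    show "bdd_below ((\<lambda>p. N (\<lambda>z. f z - p z)) ` polys n)"
      by (rule bdd_belowI[where m=0]) (use fX poly_mem diff_mem N_nonneg in blast)
  qed
  then show ?thesis using NF2 Feq by (simp add: F0_def)
qed


lemma fwd_dir:
  assumes fX: "f \<in> X" and H: "H holomorphic_on UNIV" and fH: "\<forall>z\<in>ball 0 1. f z = H z"
  shows "(\<lambda>n. best_approx N n f powr (1 / real n)) \<longlonglongrightarrow> 0"
  unfolding tendsto_iff
proof (intro allI impI)
  fix e :: real assume e: "e > 0"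
  define R where "R = max 2 (4 / e)"
  have R2: "R \<ge> 2" and Re: "R \<ge> 4 / e" unfolding R_def by auto
  define C where "C = 2 * N (restrD (\<lambda>w. H (of_real R * w)))"
  have C0: "0 \<le> C" unfolding C_def
    by (simp add: N_nonneg ent_mem holomorphic_on_compose_gen[OF _ H, unfolded o_def] holomorphic_intros)
  have Eb: "best_approx N n f \<le> (C + 1) * (1/R) ^ n" for n
  proof -
    have "best_approx N n f \<le> C * (1/R) ^ n" using fwd_bound[OF fX H fH R2, of n] by (simp add: C_def mult_ac)
    also have "\<dots> \<le> (C + 1) * (1/R) ^ n" using R2 by (intro mult_right_mono) auto
    finally show ?thesis .
  qed
  have "(\<lambda>n. (C + 1) powr (1 / real n)) \<longlonglongrightarrow> (C + 1) powr 0"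
    by (intro tendsto_powr tendsto_const lim_const_over_n) (use C0 in simp)
  then have ev1: "eventually (\<lambda>n. (C + 1) powr (1 / real n) < 2) sequentially"
    by (intro order_tendstoD(2)) auto
  have ev2: "eventually (\<lambda>n. n \<ge> 1) sequentially" by (rule eventually_ge_at_top)
  show "eventually (\<lambda>n. dist (best_approx N n f powr (1 / real n)) 0 < e) sequentially"
    using ev1 ev2
  proof eventually_elim
    case (elim n)
    have E0: "0 \<le> best_approx N n f" by (rule E_nonneg[OF fX])
    have "best_approx N n f powr (1 / real n) \<le> ((C + 1) * (1/R) ^ n) powr (1 / real n)"
      by (intro powr_mono2 E0 Eb) auto
    also have "\<dots> = (C + 1) powr (1 / real n) * ((1/R) ^ n) powr (1 / real n)"
      by (rule powr_mult)
    also have "((1/R) ^ n) powr (1 / real n) = 1/R"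
    proof -
      have "((1/R) ^ n) = (1/R) powr (real n)" using R2 by (simp add: powr_realpow)
      then show ?thesis using elim R2 by (simp add: powr_powr)
    qed
    also have "(C + 1) powr (1 / real n) * (1/R) < 2 * (1/R)"
      using elim R2 by (intro mult_strict_right_mono) auto
    also have "2 * (1/R) \<le> e / 2"
    proof -
      have "4 / e \<le> R" by (rule Re)
      then have "4 \<le> R * e" using e by (simp add: field_simps)
      then show ?thesis using R2 e by (simp add: field_simps)
    qed
    finally have "best_approx N n f powr (1 / real n) < e" using e by simp
    then show ?case by simp
  qed
qed

end

theorem theorem2p1:
  fixes X :: "(complex \<Rightarrow> complex) set" and N :: "(complex \<Rightarrow> complex) \<Rightarrow> real"
    and f :: "complex \<Rightarrow> complex"
  assumes "banach_fun_space X N"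
    and "rot_invariant X N"
    and "contains_entire X"
    and "conv_bound X N"
    and "f \<in> X"
  shows "(\<exists>h. h holomorphic_on UNIV \<and> (\<forall>z\<in>ball 0 1. f z = h z)) \<longleftrightarrow>
         (\<lambda>n. best_approx N n f powr (1 / real n)) \<longlonglongrightarrow> 0"
proof -
  interpret BFS X N using assms(1,3,4) by unfold_locales
  show ?thesis using fwd_dir[OF assms(5)] conv_dir[OF assms(5)] by blast
qed

end
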